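(* Let $A = A_1 \oplus A_2 \in \mathbb{R}^{n\times n}$ be a block-diagonal direct sum, where $A_1$ and $A_2$ are irreducible nonnegative square matrices. For $t\in[0,1]$ let $r(t) := r\big((1-t)A + tA^{\top}\big)$, and for $k=1,2$ let $r_k(t) := r\big((1-t)A_k + tA_k^{\top}\big)$, where $r(\cdot)$ denotes spectral radius. Suppose there exists $t^*\in(0,1)$ such that (1) $r_1(t^* ) = r_2(t^* )$, and (2) $r_1'(t^* ) \neq r_2'(t^* )$. Then $r(t)$ is not concave in $t\in(0,1)$.
   Context: $r(M)$ denotes the spectral radius of a square matrix $M$. The direct sum $A_1\oplus A_2$ is the block-diagonal matrix with diagonal blocks $A_1, A_2$. *)

theory Defs
  imports "HOL-Analysis.Analysis" "Jordan_Normal_Form.Spectral_Radius"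
begin

definition nonneg_mat :: "real mat \<Rightarrow> bool" where
  "nonneg_mat A \<longleftrightarrow> (\<forall>i<dim_row A. \<forall>j<dim_col A. A $$ (i,j) \<ge> 0)"

text \<open>Irreducibility (Horn--Johnson convention): an n x n matrix with n \<ge> 1 is reducible
  if n = 1 and it is zero, or if n \<ge> 2 and it is permutation-similar to a block upper
  triangular matrix, i.e. there is a nonempty proper index set J with A(i,j) = 0 for all
  i in J and j not in J.\<close>
definition irreducible_mat :: "real mat \<Rightarrow> bool" where
  "irreducible_mat A \<longleftrightarrow>
     (let n = dim_row A in
       dim_col A = n \<and> n \<ge> 1 \<and>
       (n = 1 \<longrightarrow> A $$ (0,0) \<noteq> 0) \<and>
       (n \<ge> 2 \<longrightarrow> \<not> (\<exists>J. J \<noteq> {} \<and> J \<subset> {..<n} \<and>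
                         (\<forall>i\<in>J. \<forall>j\<in>{..<n} - J. A $$ (i,j) = 0))))"

definition spec_rad :: "real mat \<Rightarrow> real" where
  "spec_rad A = spectral_radius (map_mat complex_of_real A)"

definition sym_path :: "real mat \<Rightarrow> real \<Rightarrow> real mat" where
  "sym_path A t = (1 - t) \<cdot>\<^sub>m A + t \<cdot>\<^sub>m transpose_mat A"

end

theory Submission
  imports Defs
begin

lemma concave_kink:
  fixes f g1 g2 :: "real \<Rightarrow> real"
  assumes conc: "concave_on {0<..<1} f" and ts: "0 < ts" "ts < 1"
    and ge1: "\<And>t. g1 t \<le> f t" and ge2: "\<And>t. g2 t \<le> f t"
    and e1: "f ts = g1 ts" and e2: "f ts = g2 ts"
    and D1: "(g1 has_real_derivative d1) (at ts)"
    and D2: "(g2 has_real_derivative d2) (at ts)"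
    and lt: "d2 < d1"
  shows False
proof -
  define \<phi> where "\<phi> = (\<lambda>h. g1 (ts + h) + g2 (ts - h) - 2 * f ts)"
  have "((\<lambda>h. g1 (h + ts)) has_real_derivative d1) (at 0)"
    using DERIV_shift[of g1 d1 0 ts] D1 by simp
  hence a: "((\<lambda>h. g1 (ts + h)) has_real_derivative d1) (at 0)" by (simp add: add.commute)
  have b0: "((\<lambda>h. g2 (h + ts)) has_real_derivative d2) (at (- 0))"
    using DERIV_shift[of g2 d2 0 ts] D2 by simp
  have "((\<lambda>h. g2 (- h + ts)) has_real_derivative (- d2)) (at 0)"
    using DERIV_mirror[of "\<lambda>h. g2 (h + ts)" d2 0] b0 by simp
  hence b: "((\<lambda>h. g2 (ts - h)) has_real_derivative (- d2)) (at 0)" by (simp add: add.commute)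
  from a b have "(\<phi> has_real_derivative (d1 - d2)) (at 0)"
    unfolding \<phi>_def by (auto intro!: derivative_eq_intros)
  from DERIV_pos_inc_right[OF this] lt obtain d where d: "d > 0"
    and dd: "\<And>h. h > 0 \<Longrightarrow> h < d \<Longrightarrow> \<phi> 0 < \<phi> (0 + h)" by auto
  define h where "h = min d (min ts (1 - ts)) / 2"
  have h: "h > 0" "h < d" "h < ts" "h < 1 - ts" using d ts unfolding h_def by auto
  have "\<phi> 0 < \<phi> h" using dd[OF h(1,2)] by simp
  moreover have "\<phi> 0 = 0" unfolding \<phi>_def using e1 e2 by simp
  moreover have "\<phi> h \<le> 0"
  proof -
    have cv: "convex_on {0<..<1} (\<lambda>x. - f x)" using conc unfolding concave_on_def by simp
    have "(\<lambda>x. - f x) ((1 - 1/2) *\<^sub>R (ts + h) + (1/2) *\<^sub>R (ts - h)) \<le> (1 - 1/2) * (- f (ts + h)) + (1/2) * (- f (ts - h))"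
      by (rule convex_onD[OF cv]) (use h ts in auto)
    moreover have "(1 - 1/2) *\<^sub>R (ts + h) + (1/2) *\<^sub>R (ts - h) = ts" by (simp add: field_simps)
    ultimately have "- f ts \<le> (1 - 1/2) * (- f (ts + h)) + (1/2) * (- f (ts - h))" by simp
    hence "f ts \<ge> (f (ts + h) + f (ts - h)) / 2" by simp
    thus ?thesis unfolding \<phi>_def using ge1[of "ts + h"] ge2[of "ts - h"] by simp
  qed
  ultimately show False by simp
qed

lemma sym_path_block:
  assumes "A1 \<in> carrier_mat n1 n1" "A2 \<in> carrier_mat n2 n2"
  shows "sym_path (four_block_mat A1 (0\<^sub>m n1 n2) (0\<^sub>m n2 n1) A2) t
     = four_block_mat (sym_path A1 t) (0\<^sub>m n1 n2) (0\<^sub>m n2 n1) (sym_path A2 t)"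
  by (rule eq_matI) (use assms in \<open>auto simp: sym_path_def\<close>)

lemma map_block:
  assumes "B1 \<in> carrier_mat n1 n1" "B2 \<in> carrier_mat n2 n2"
  shows "map_mat complex_of_real (four_block_mat B1 (0\<^sub>m n1 n2) (0\<^sub>m n2 n1) B2)
     = four_block_mat (map_mat complex_of_real B1) (0\<^sub>m n1 n2) (0\<^sub>m n2 n1) (map_mat complex_of_real B2)"
  by (rule eq_matI) (use assms in auto)

lemma char_poly_block:
  fixes B1 B2 :: "'a :: field mat"
  assumes A1: "B1 \<in> carrier_mat n1 n1" and A3: "B2 \<in> carrier_mat n2 n2"
  shows "char_poly (four_block_mat B1 (0\<^sub>m n1 n2) (0\<^sub>m n2 n1) B2) = char_poly B1 * char_poly B2"
proof -
  let ?cm = "\<lambda> A. [:0, 1:] \<cdot>\<^sub>m 1\<^sub>m (dim_row A) + map_mat (\<lambda>a. [:- a:]) A"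
  let ?A = "four_block_mat B1 (0\<^sub>m n1 n2) (0\<^sub>m n2 n1) B2"
  have "char_poly ?A = det (?cm ?A)"
    unfolding char_poly_defs using A1 A3 by simp
  also have "?cm ?A = four_block_mat (?cm B1) (0\<^sub>m n1 n2) (0\<^sub>m n2 n1) (?cm B2)"
    by (rule eq_matI, insert A1 A3, auto simp: one_poly_def)
  also have "det \<dots> = det (?cm B1) * det (?cm B2)"
    by (rule det_four_block_mat_upper_right_zero, insert A1 A3, auto)
  also have "\<dots> = char_poly B1 * char_poly B2" unfolding char_poly_defs ..
  finally show ?thesis .
qed

lemma spectrum_block:
  fixes B1 B2 :: "'a :: field mat"
  assumes A1: "B1 \<in> carrier_mat n1 n1" and A3: "B2 \<in> carrier_mat n2 n2"
  shows "spectrum (four_block_mat B1 (0\<^sub>m n1 n2) (0\<^sub>m n2 n1) B2) = spectrum B1 \<union> spectrum B2"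
proof -
  have c: "four_block_mat B1 (0\<^sub>m n1 n2) (0\<^sub>m n2 n1) B2 \<in> carrier_mat (n1+n2) (n1+n2)"
    using assms by auto
  show ?thesis
    unfolding spectrum_root_char_poly[OF c] spectrum_root_char_poly[OF A1]
      spectrum_root_char_poly[OF A3] char_poly_block[OF assms] by (auto simp: poly_mult)
qed

lemma sr_block:
  fixes B1 B2 :: "complex mat"
  assumes A1: "B1 \<in> carrier_mat n1 n1" and A3: "B2 \<in> carrier_mat n2 n2"
    and n: "n1 > 0" "n2 > 0"
  shows "spectral_radius (four_block_mat B1 (0\<^sub>m n1 n2) (0\<^sub>m n2 n1) B2)
     = max (spectral_radius B1) (spectral_radius B2)"
  unfolding spectral_radius_def spectrum_block[OF A1 A3] image_Un
  by (rule Max_Un) (use card_finite_spectrum(1)[OF A1] card_finite_spectrum(1)[OF A3]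
     spectrum_non_empty[OF A1 n(1)] spectrum_non_empty[OF A3 n(2)] in auto)

theorem proposition1:
  fixes A1 A2 A :: "real mat" and n1 n2 :: nat and ts d1 d2 :: real
  assumes "A1 \<in> carrier_mat n1 n1" and "A2 \<in> carrier_mat n2 n2"
    and "nonneg_mat A1" and "nonneg_mat A2"
    and "irreducible_mat A1" and "irreducible_mat A2"
    and "A = four_block_mat A1 (0\<^sub>m n1 n2) (0\<^sub>m n2 n1) A2"
    and "0 < ts" and "ts < 1"
    and "spec_rad (sym_path A1 ts) = spec_rad (sym_path A2 ts)"
    and "((\<lambda>t. spec_rad (sym_path A1 t)) has_real_derivative d1) (at ts)"
    and "((\<lambda>t. spec_rad (sym_path A2 t)) has_real_derivative d2) (at ts)"
    and "d1 \<noteq> d2"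
  shows "\<not> concave_on {0<..<1} (\<lambda>t. spec_rad (sym_path A t))"
proof
  assume conc: "concave_on {0<..<1} (\<lambda>t. spec_rad (sym_path A t))"
  have n: "n1 > 0" "n2 > 0" using assms(1,2,5,6) unfolding irreducible_mat_def Let_def by auto
  have r: "spec_rad (sym_path A t) = max (spec_rad (sym_path A1 t)) (spec_rad (sym_path A2 t))" for t
  proof -
    have c1: "sym_path A1 t \<in> carrier_mat n1 n1" "sym_path A2 t \<in> carrier_mat n2 n2"
      using assms(1,2) by (auto simp: sym_path_def)
    have c2: "map_mat complex_of_real (sym_path A1 t) \<in> carrier_mat n1 n1"
       "map_mat complex_of_real (sym_path A2 t) \<in> carrier_mat n2 n2" using c1 by auto
    show ?thesis unfolding spec_rad_def assms(7) sym_path_block[OF assms(1,2)] map_block[OF c1]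
      by (rule sr_block[OF c2 n])
  qed
  show False
  proof (cases "d2 < d1")
    case True
    show False
      by (rule concave_kink[OF conc assms(8,9) _ _ _ _ assms(11,12) True]) (use r assms(10) in auto)
  next
    case False
    then have "d1 < d2" using assms(13) by auto
    show False
      by (rule concave_kink[OF conc assms(8,9) _ _ _ _ assms(12,11) \<open>d1 < d2\<close>]) (use r assms(10) in auto)
  qed
qed

end
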